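(* Let $r\ge 20$ and $n\ge1$ be integers, let $G=K_r^n$, and let $c=\frac{1}{40}\min\left(10^{-9},\left(1-\frac{1}{r}\right)^{n-1}\right)$. Let $0\le\epsilon<c$ and let $J$ be an independent set of $G$ with $\frac{|J|}{|G|}=\frac{1}{r}(1-\epsilon)$. Then there exists an independent set $I$ of $G$ with $\frac{|I|}{|G|}=\frac{1}{r}$ such that $J\subseteq I$.
   Context: $K_r^n$ is the $n$-fold weak (tensor) product of the complete graph $K_r$: its vertex set is $\mathbb{Z}_r^n$, and two vertices $x,y\in\mathbb{Z}_r^n$ are adjacent iff $x_j\neq y_j$ for every coordinate $j=1,\dots,n$. $|G|=r^n$ denotes the number of vertices. *)

theory Defs
  imports Complex_Main
begin

text \<open>Vertices of K_r^n: words x in Z_r^n, represented as functions nat => nat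
  with x j < r for j < n and x j = 0 for j >= n (canonical extension).\<close>
definition kvert :: "nat \<Rightarrow> nat \<Rightarrow> (nat \<Rightarrow> nat) set" where
  "kvert r n = {x. (\<forall>j<n. x j < r) \<and> (\<forall>j\<ge>n. x j = 0)}"

text \<open>Adjacency in the weak (tensor) product: differ in every coordinate.\<close>
definition kadj :: "nat \<Rightarrow> (nat \<Rightarrow> nat) \<Rightarrow> (nat \<Rightarrow> nat) \<Rightarrow> bool" where
  "kadj n x y \<longleftrightarrow> (\<forall>j<n. x j \<noteq> y j)"

definition kindep :: "nat \<Rightarrow> nat \<Rightarrow> (nat \<Rightarrow> nat) set \<Rightarrow> bool" where
  "kindep r n S \<longleftrightarrow> S \<subseteq> kvert r n \<and> (\<forall>x\<in>S. \<forall>y\<in>S. \<not> kadj n x y)"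

end

theory Submission
  imports Defs "HOL-Number_Theory.Cong"
begin


definition box :: "nat \<Rightarrow> (nat \<Rightarrow> nat set) \<Rightarrow> (nat \<Rightarrow> nat) set" where
  "box n S = {x. (\<forall>j<n. x j \<in> S j) \<and> (\<forall>j\<ge>n. x j = 0)}"

lemma box_Suc: "box (Suc n) S = (\<lambda>(x,v). x(n := v)) ` (box n S \<times> S n)"
proof (intro equalityI subsetI)
  fix y assume y: "y \<in> box (Suc n) S"
  let ?x = "y(n := 0)"
  have "?x \<in> box n S" using y by (auto simp: box_def)
  moreover have "y n \<in> S n" using y by (auto simp: box_def)
  moreover have "y = ?x(n := y n)" by simp
  ultimately show "y \<in> (\<lambda>(x,v). x(n := v)) ` (box n S \<times> S n)"
    by (intro image_eqI[of _ _ "(?x, y n)"]) auto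
next
  fix y assume "y \<in> (\<lambda>(x,v). x(n := v)) ` (box n S \<times> S n)"
  then obtain x v where "x \<in> box n S" "v \<in> S n" "y = x(n:=v)" by auto
  then show "y \<in> box (Suc n) S" by (auto simp: box_def less_Suc_eq)
qed

lemma inj_box: "inj_on (\<lambda>(x,v). x(n := v)) (box n S \<times> S n)"
proof (rule inj_onI, clarify)
  fix x v x' v'
  assume x: "x \<in> box n S" and x': "x' \<in> box n S" and e: "x(n := v) = x'(n := v')"
  have "v = v'" using fun_cong[OF e, of n] by simp
  moreover have "x = x'"
  proof
    fix j show "x j = x' j"
    proof (cases "j = n")
      case True then show ?thesis using x x' by (auto simp: box_def)
    next
      case False then show ?thesis using fun_cong[OF e, of j] by simp
    qed
  qed
  ultimately show "x = x' \<and> v = v'" by simp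
qed

lemma card_box:
  assumes "\<forall>j<n. finite (S j)"
  shows "finite (box n S) \<and> card (box n S) = (\<Prod>j<n. card (S j))"
  using assms
proof (induction n)
  case 0
  have "box 0 S = {\<lambda>_. 0}" by (auto simp: box_def)
  then show ?case by simp
next
  case (Suc n)
  then have IH: "finite (box n S)" "card (box n S) = (\<Prod>j<n. card (S j))" by auto
  have fS: "finite (S n)" using Suc.prems by auto
  have "card (box (Suc n) S) = card (box n S \<times> S n)"
    unfolding box_Suc by (rule card_image[OF inj_box])
  also have "\<dots> = card (box n S) * card (S n)" by (rule card_cartesian_product)
  finally show ?case using IH fS by (simp add: box_Suc)
qed

lemma box_mono: "(\<And>j. j < n \<Longrightarrow> S j \<subseteq> T j) \<Longrightarrow> box n S \<subseteq> box n T"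
  by (auto simp: box_def)

lemma kvert_box: "kvert r n = box n (\<lambda>_. {..<r})"
  by (auto simp: kvert_def box_def)

lemma finite_kvert: "finite (kvert r n)"
  using card_box[of n "\<lambda>_. {..<r}"] by (simp add: kvert_box)

lemma card_kvert: "card (kvert r n) = r ^ n"
  using card_box[of n "\<lambda>_. {..<r}"] by (simp add: kvert_box)

lemma prod_except:
  assumes "i < m"
  shows "(\<Prod>j<m. if j = i then c else d) = (c::nat) * d ^ (m - 1)"
proof -
  have "(\<Prod>j<m. if j = i then c else d) = (if i = i then c else d) * (\<Prod>j\<in>{..<m} - {i}. if j = i then c else d)"
    using assms by (subst prod.remove[of _ i]) auto
  also have "(\<Prod>j\<in>{..<m} - {i}. if j = i then c else d) = (\<Prod>j\<in>{..<m} - {i}. d)"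
    by (rule prod.cong) auto
  also have "\<dots> = d ^ (m - 1)" using assms by simp
  finally show ?thesis by simp
qed

lemma mod_cancel_lt:
  assumes "(a + k) mod r = (b + k) mod (r::nat)" "a < r" "b < r"
  shows "a = b"
proof -
  have "[k + a = k + b] (mod r)" using assms(1) by (simp add: cong_def add.commute)
  then have "[a = b] (mod r)" by (simp add: cong_add_lcancel_nat)
  then show ?thesis using assms cong_less_modulus_unique_nat by blast
qed

lemma mod_cancel_lt2:
  assumes "(a + k) mod r = (a + k') mod (r::nat)" "k < r" "k' < r"
  shows "k = k'"
  using mod_cancel_lt[of k a r k'] assms by (simp add: add.commute)

lemma mod_inv_eq:
  assumes "a < r" "b < (r::nat)"
  shows "(a + (b + r - a) mod r) mod r = b"
proof -
  have "(a + (b + r - a) mod r) mod r = (a + (b + r - a)) mod r" by (simp add: mod_add_right_eq)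
  also have "a + (b + r - a) = b + r" using assms by simp
  finally show ?thesis using assms by simp
qed



definition agree :: "nat \<Rightarrow> (nat \<Rightarrow> nat) set \<Rightarrow> bool" where
  "agree n J \<longleftrightarrow> (\<forall>x\<in>J. \<forall>y\<in>J. \<exists>j<n. x j = y j)"

definition dict :: "nat \<Rightarrow> nat \<Rightarrow> (nat \<Rightarrow> nat) set \<Rightarrow> bool" where
  "dict r n J \<longleftrightarrow> (\<exists>i<n. \<exists>a<r. \<forall>x\<in>J. x i = a)"

definition part :: "nat \<Rightarrow> nat \<Rightarrow> nat \<Rightarrow> (nat\<Rightarrow>nat) set \<Rightarrow> (nat\<Rightarrow>nat) set" where
  "part r m k J = {x\<in>J. x (Suc m) = (x m + k) mod r}"

definition slice :: "nat \<Rightarrow> nat \<Rightarrow> nat \<Rightarrow> (nat\<Rightarrow>nat) set \<Rightarrow> (nat\<Rightarrow>nat) set" where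
  "slice r m k J = (\<lambda>x. x(Suc m := 0)) ` part r m k J"

lemma slice_kvert:
  assumes "J \<subseteq> kvert r (Suc (Suc m))"
  shows "slice r m k J \<subseteq> kvert r (Suc m)"
  using assms by (auto simp: slice_def part_def kvert_def)

lemma slice_agree:
  assumes "J \<subseteq> kvert r (Suc (Suc m))" "agree (Suc (Suc m)) J"
  shows "agree (Suc m) (slice r m k J)"
  unfolding agree_def
proof (intro ballI)
  fix y y' assume "y \<in> slice r m k J" "y' \<in> slice r m k J"
  then obtain x x' where x: "x \<in> J" "x (Suc m) = (x m + k) mod r" "y = x(Suc m := 0)"
    and x': "x' \<in> J" "x' (Suc m) = (x' m + k) mod r" "y' = x'(Suc m := 0)"
    unfolding slice_def part_def by blast
  obtain j where j: "j < Suc (Suc m)" "x j = x' j" using assms(2) x(1) x'(1) unfolding agree_def by blast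
  show "\<exists>j<Suc m. y j = y' j"
  proof (cases "j = Suc m")
    case True
    have "x m < r" "x' m < r" using assms(1) x(1) x'(1) by (auto simp: kvert_def)
    have "(x m + k) mod r = (x' m + k) mod r" using j(2) x(2) x'(2) True by simp
    then have "x m = x' m" using mod_cancel_lt[of "x m" k r "x' m"] \<open>x m < r\<close> \<open>x' m < r\<close> by blast
    then show ?thesis using x(3) x'(3) by (intro exI[of _ m]) simp
  next
    case False
    then show ?thesis using j x(3) x'(3) by (intro exI[of _ j]) simp
  qed
qed

lemma card_slice:
  "card (slice r m k J) = card (part r m k J)"
  unfolding slice_def
proof (rule card_image, rule inj_onI)
  fix x x' assume x: "x \<in> part r m k J" and x': "x' \<in> part r m k J"
    and e: "x(Suc m := 0) = x'(Suc m := 0)"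
  have "x m = x' m" using fun_cong[OF e, of m] by simp
  then have "x (Suc m) = x' (Suc m)" using x x' by (simp add: part_def)
  show "x = x'"
  proof
    fix j show "x j = x' j"
      using fun_cong[OF e, of j] \<open>x (Suc m) = x' (Suc m)\<close> by (cases "j = Suc m") auto
  qed
qed

lemma card_parts:
  assumes "J \<subseteq> kvert r (Suc (Suc m))"
  shows "card J = (\<Sum>k<r. card (part r m k J))"
proof -
  have fJ: "finite J" using assms finite_kvert finite_subset by blast
  have "J = (\<Union>k\<in>{..<r}. part r m k J)"
  proof (intro equalityI subsetI)
    fix x assume x: "x \<in> J"
    have lt: "x m < r" "x (Suc m) < r" using assms x by (auto simp: kvert_def)
    then have "r > 0" by simp
    let ?k = "(x (Suc m) + r - x m) mod r"
    have "?k < r" using \<open>r > 0\<close> by simp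
    moreover have "x \<in> part r m ?k J" using x mod_inv_eq[OF lt] by (simp add: part_def)
    ultimately show "x \<in> (\<Union>k\<in>{..<r}. part r m k J)" by blast
  qed (auto simp: part_def)
  then have "card J = card (\<Union>k\<in>{..<r}. part r m k J)" by (rule arg_cong)
  also have "\<dots> = (\<Sum>k<r. card (part r m k J))"
  proof (rule card_UN_disjoint)
    show "\<forall>i\<in>{..<r}. finite (part r m i J)" using fJ by (auto simp: part_def)
    show "\<forall>i\<in>{..<r}. \<forall>j\<in>{..<r}. i \<noteq> j \<longrightarrow> part r m i J \<inter> part r m j J = {}"
    proof (intro ballI impI)
      fix i j assume ij: "i \<in> {..<r}" "j \<in> {..<r}" "i \<noteq> j"
      show "part r m i J \<inter> part r m j J = {}"
      proof (rule ccontr)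
        assume "part r m i J \<inter> part r m j J \<noteq> {}"
        then obtain x where "x (Suc m) = (x m + i) mod r" "x (Suc m) = (x m + j) mod r"
          by (auto simp: part_def)
        then have "i = j" using mod_cancel_lt2[of "x m" i r j] ij by simp
        then show False using ij by simp
      qed
    qed
  qed simp
  finally show ?thesis .
qed

lemma card_slices:
  assumes "J \<subseteq> kvert r (Suc (Suc m))"
  shows "card J = (\<Sum>k<r. card (slice r m k J))"
  using card_parts[OF assms] by (simp add: card_slice)

lemma ekr:
  assumes "J \<subseteq> kvert r (Suc n)" "agree (Suc n) J"
  shows "card J \<le> r ^ n"
  using assms
proof (induction n arbitrary: J)
  case 0
  have fJ: "finite J" using 0 finite_kvert finite_subset by blast
  have "\<forall>x\<in>J. \<forall>y\<in>J. x = y"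
  proof (intro ballI)
    fix x y assume "x \<in> J" "y \<in> J"
    then have "x 0 = y 0" "\<forall>j\<ge>1. x j = 0" "\<forall>j\<ge>1. y j = 0"
      using 0 by (auto simp: agree_def kvert_def)
    then show "x = y"
    proof -
      assume a: "x 0 = y 0" "\<forall>j\<ge>1. x j = 0" "\<forall>j\<ge>1. y j = 0"
      show "x = y"
      proof
        fix j show "x j = y j" using a by (cases "j = 0") auto
      qed
    qed
  qed
  then show ?case using card_le_Suc0_iff_eq[OF fJ] by simp
next
  case (Suc m)
  have "card J = (\<Sum>k<r. card (slice r m k J))" by (rule card_slices[OF Suc.prems(1)])
  also have "\<dots> \<le> (\<Sum>k<r. r ^ m)"
    by (rule sum_mono, rule Suc.IH[OF slice_kvert[OF Suc.prems(1)] slice_agree[OF Suc.prems]])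
  also have "\<dots> = r ^ Suc m" by simp
  finally show ?case .
qed



lemma mod_solve:
  assumes "(x + k) mod r = e" "x < r" "k < r" "e < (r::nat)"
  shows "x = (e + r - k) mod r"
proof -
  have "((e + r - k) mod r + k) mod r = (e + r - k + k) mod r" by (simp add: mod_add_left_eq)
  also have "e + r - k + k = e + r" using assms by simp
  finally have "((e + r - k) mod r + k) mod r = (x + k) mod r" using assms by simp
  moreover have "(e + r - k) mod r < r" using assms by simp
  ultimately show ?thesis using mod_cancel_lt[of x k r "(e + r - k) mod r"] assms by simp
qed

lemma card_minus1: "b < r \<Longrightarrow> card ({..<r} - {b::nat}) = r - 1"
  by simp

lemma card_minus2: "r - 2 \<le> card ({..<r} - {b::nat, c})"
proof -
  have "card {..<r} - card {b, c} \<le> card ({..<r} - {b, c})" by (rule diff_card_le_card_Diff) simp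
  moreover have "card {b, c} \<le> 2" by (simp add: card_insert_if)
  ultimately show ?thesis by simp
qed

lemma dict_base:
  assumes "0 < r" "J \<subseteq> kvert r (Suc 0)" "agree (Suc 0) J"
  shows "dict r (Suc 0) J"
proof (cases "J = {}")
  case True then show ?thesis using assms by (auto simp: dict_def)
next
  case False
  then obtain x0 where x0: "x0 \<in> J" by blast
  have "x0 0 < r" using x0 assms by (auto simp: kvert_def)
  moreover have "\<forall>x\<in>J. x 0 = x0 0" using assms(3) x0 by (auto simp: agree_def)
  ultimately show ?thesis unfolding dict_def by blast
qed



lemma slice_mem:
  assumes "x \<in> J" "x (Suc m) = (x m + k) mod r"
  shows "x(Suc m := 0) \<in> slice r m k J"
  using assms unfolding slice_def part_def by blast

lemma slice_memD:
  assumes "y \<in> slice r m k J"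
  obtains x where "x \<in> J" "x (Suc m) = (x m + k) mod r" "y = x(Suc m := 0)"
  using assms unfolding slice_def part_def by blast

lemma bad_case_lt:
  assumes r3: "3 \<le> r" and J: "J \<subseteq> kvert r (Suc (Suc m))" and ag: "agree (Suc (Suc m)) J"
    and im: "i < m" and a: "a < r" and k: "k < r"
    and all: "\<forall>y\<in>slice r m k J. y i = a"
    and w: "w \<in> J" "w i \<noteq> a"
  shows "2 * card (slice r m k J) + (r-1)^m \<le> 2 * r^m"
proof -
  define c' where "c' = (w (Suc m) + r - k) mod r"
  define SD where "SD j = (if j = i then {a} else {..<r})" for j
  define SM where "SM j = (if j = i then {a} else if j = m then {..<r} - {w m, c'} else {..<r} - {w j})" for j
  have sub: "slice r m k J \<subseteq> box (Suc m) SD - box (Suc m) SM"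
  proof
    fix y assume y: "y \<in> slice r m k J"
    then obtain x where x: "x \<in> J" "x (Suc m) = (x m + k) mod r" "y = x(Suc m := 0)"
      by (rule slice_memD)
    have yk: "y \<in> kvert r (Suc m)" using slice_kvert[OF J] y by blast
    have yi: "y i = a" using all y by blast
    have "y \<in> box (Suc m) SD" using yk yi by (auto simp: box_def kvert_def SD_def)
    moreover have "y \<notin> box (Suc m) SM"
    proof
      assume yM: "y \<in> box (Suc m) SM"
      obtain j where j: "j < Suc (Suc m)" "x j = w j" using ag x(1) w(1) unfolding agree_def by blast
      have ym: "y m = x m" using x(3) by simp
      have yMm: "y m \<in> SM m" using yM by (simp add: box_def)
      have mi: "m \<noteq> i" using im by simp
      show False
      proof (cases "j = Suc m")
        case True
        have lt: "x m < r" "w (Suc m) < r" using x(1) w(1) J by (auto simp: kvert_def)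
        have "(x m + k) mod r = w (Suc m)" using x(2) j(2) True by simp
        then have "x m = c'" unfolding c'_def using mod_solve lt k by blast
        then show False using yMm ym mi by (simp add: SM_def)
      next
        case False
        then have jl: "j < Suc m" using j(1) by simp
        have yj: "y j = x j" using x(3) False by simp
        show False
        proof (cases "j = i")
          case True then show False using yi yj j(2) w(2) by simp
        next
          case ji: False
          have "y j \<in> SM j" using yM jl by (simp add: box_def)
          then show False using yj j(2) ji by (auto simp: SM_def split: if_splits)
        qed
      qed
    qed
    ultimately show "y \<in> box (Suc m) SD - box (Suc m) SM" by blast
  qed
  have finSD: "\<forall>j<Suc m. finite (SD j)" by (simp add: SD_def)
  have finSM: "\<forall>j<Suc m. finite (SM j)" by (simp add: SM_def)
  have wlt: "\<And>j. j < Suc (Suc m) \<Longrightarrow> w j < r" using w(1) J by (auto simp: kvert_def)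
  have "card (box (Suc m) SD) = (\<Prod>j<Suc m. card (SD j))" using card_box[OF finSD] by simp
  also have "\<dots> = (\<Prod>j<m. card (SD j)) * card (SD m)" by simp
  also have "(\<Prod>j<m. card (SD j)) = (\<Prod>j<m. if j = i then 1 else r)"
    by (rule prod.cong) (auto simp: SD_def)
  also have "\<dots> = r ^ (m - 1)" using prod_except[OF im] by simp
  finally have cD0: "card (box (Suc m) SD) = r ^ (m - 1) * card (SD m)" .
  have "card (SD m) = r" using im by (simp add: SD_def)
  moreover have "r ^ (m - 1) * r = r ^ m" using im by (cases m) auto
  ultimately have cD: "card (box (Suc m) SD) = r ^ m" using cD0 by simp
  have "card (box (Suc m) SM) = (\<Prod>j<Suc m. card (SM j))" using card_box[OF finSM] by simp
  also have "\<dots> = (\<Prod>j<m. card (SM j)) * card (SM m)" by simp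
  also have "(\<Prod>j<m. card (SM j)) = (\<Prod>j<m. if j = i then 1 else r - 1)"
    by (rule prod.cong) (auto simp: SM_def wlt)
  also have "\<dots> = (r - 1) ^ (m - 1)" using prod_except[OF im] by simp
  finally have cM0: "card (box (Suc m) SM) = (r - 1) ^ (m - 1) * card (SM m)" .
  have "r - 2 \<le> card (SM m)" using im card_minus2 by (simp add: SM_def)
  then have cM: "(r - 1) ^ (m - 1) * (r - 2) \<le> card (box (Suc m) SM)" using cM0 by simp
  have MD: "box (Suc m) SM \<subseteq> box (Suc m) SD" by (rule box_mono) (auto simp: SM_def SD_def)
  have fD: "finite (box (Suc m) SD)" using card_box[OF finSD] by simp
  have "card (slice r m k J) \<le> card (box (Suc m) SD - box (Suc m) SM)"
    by (rule card_mono[OF _ sub]) (use fD in blast)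
  also have "\<dots> = card (box (Suc m) SD) - card (box (Suc m) SM)"
    by (rule card_Diff_subset[OF finite_subset[OF MD fD] MD])
  finally have main: "card (slice r m k J) + (r - 1) ^ (m - 1) * (r - 2) \<le> r ^ m"
    using cD cM MD card_mono[OF fD MD] by linarith
  have pm: "(r - 1) ^ m = (r - 1) ^ (m - 1) * (r - 1)" using im
    by (cases m) auto
  have "(r - 1) ^ (m - 1) * (r - 1) \<le> (r - 1) ^ (m - 1) * (2 * (r - 2))"
    using r3 by (intro mult_le_mono2) linarith
  then have "(r - 1) ^ m \<le> 2 * ((r - 1) ^ (m - 1) * (r - 2))" using pm by (simp add: ac_simps)
  then show ?thesis using main by linarith
qed



lemma bad_case_eq:
  assumes J: "J \<subseteq> kvert r (Suc (Suc m))" and ag: "agree (Suc (Suc m)) J"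
    and a: "a < r" and k: "k < r"
    and all: "\<forall>y\<in>slice r m k J. y m = a"
    and w: "w \<in> J" "w m \<noteq> a" "w (Suc m) \<noteq> (a + k) mod r"
  shows "2 * card (slice r m k J) + (r-1)^m \<le> 2 * r^m"
proof -
  define SD where "SD j = (if j = m then {a} else {..<r})" for j
  define SM where "SM j = (if j = m then {a} else {..<r} - {w j})" for j
  have sub: "slice r m k J \<subseteq> box (Suc m) SD - box (Suc m) SM"
  proof
    fix y assume y: "y \<in> slice r m k J"
    then obtain x where x: "x \<in> J" "x (Suc m) = (x m + k) mod r" "y = x(Suc m := 0)"
      by (rule slice_memD)
    have yk: "y \<in> kvert r (Suc m)" using slice_kvert[OF J] y by blast
    have ya: "y m = a" using all y by blast
    have xa: "x m = a" using ya x(3) by simp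
    have "y \<in> box (Suc m) SD" using yk ya by (auto simp: box_def kvert_def SD_def)
    moreover have "y \<notin> box (Suc m) SM"
    proof
      assume yM: "y \<in> box (Suc m) SM"
      obtain j where j: "j < Suc (Suc m)" "x j = w j" using ag x(1) w(1) unfolding agree_def by blast
      show False
      proof (cases "j = Suc m")
        case True then show False using x(2) xa j(2) w(3) by simp
      next
        case False
        show False
        proof (cases "j = m")
          case True then show False using xa j(2) w(2) by simp
        next
          case jm: False
          then have jl: "j < Suc m" "j \<noteq> m" using j(1) False by auto
          have "y j \<in> SM j" using yM jl by (simp add: box_def)
          moreover have "y j = x j" using x(3) False by simp
          ultimately show False using j(2) jl by (simp add: SM_def)
        qed
      qed
    qed
    ultimately show "y \<in> box (Suc m) SD - box (Suc m) SM" by blast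
  qed
  have finSD: "\<forall>j<Suc m. finite (SD j)" by (simp add: SD_def)
  have finSM: "\<forall>j<Suc m. finite (SM j)" by (simp add: SM_def)
  have wlt: "\<And>j. j < Suc (Suc m) \<Longrightarrow> w j < r" using w(1) J by (auto simp: kvert_def)
  have "card (box (Suc m) SD) = (\<Prod>j<Suc m. card (SD j))" using card_box[OF finSD] by simp
  also have "\<dots> = (\<Prod>j<m. card (SD j)) * card (SD m)" by simp
  also have "(\<Prod>j<m. card (SD j)) = (\<Prod>j<m. r)"
    by (rule prod.cong) (auto simp: SD_def)
  finally have cD0: "card (box (Suc m) SD) = (\<Prod>j<m. r) * card (SD m)" .
  have "card (SD m) = 1" by (simp add: SD_def)
  then have cD: "card (box (Suc m) SD) = r ^ m" using cD0 by simp
  have "card (box (Suc m) SM) = (\<Prod>j<Suc m. card (SM j))" using card_box[OF finSM] by simp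
  also have "\<dots> = (\<Prod>j<m. card (SM j)) * card (SM m)" by simp
  also have "(\<Prod>j<m. card (SM j)) = (\<Prod>j<m. r - 1)"
    by (rule prod.cong) (auto simp: SM_def wlt)
  finally have cM0: "card (box (Suc m) SM) = (\<Prod>j<m. r - 1) * card (SM m)" .
  have "card (SM m) = 1" by (simp add: SM_def)
  then have cM: "card (box (Suc m) SM) = (r - 1) ^ m" using cM0 by simp
  have MD: "box (Suc m) SM \<subseteq> box (Suc m) SD" by (rule box_mono) (auto simp: SM_def SD_def)
  have fD: "finite (box (Suc m) SD)" using card_box[OF finSD] by simp
  have "card (slice r m k J) \<le> card (box (Suc m) SD - box (Suc m) SM)"
    by (rule card_mono[OF _ sub]) (use fD in blast)
  also have "\<dots> = card (box (Suc m) SD) - card (box (Suc m) SM)"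
    by (rule card_Diff_subset[OF finite_subset[OF MD fD] MD])
  finally have main: "card (slice r m k J) + (r - 1) ^ m \<le> r ^ m"
    using cD cM MD card_mono[OF fD MD] by linarith
  then show ?thesis by linarith
qed

lemma hm:
  assumes r3: "3 \<le> r"
  shows "J \<subseteq> kvert r (Suc n) \<Longrightarrow> agree (Suc n) J \<Longrightarrow> \<not> dict r (Suc n) J
    \<Longrightarrow> 2 * card J + (r-1)^n \<le> 2 * r^n"
proof (induction n arbitrary: J)
  case 0
  then show ?case using dict_base[of r J] r3 by simp
next
  case (Suc m)
  note J = Suc.prems(1) and ag = Suc.prems(2) and nd = Suc.prems(3)
  define S where "S k = slice r m k J" for k
  have Sk: "S k \<subseteq> kvert r (Suc m)" "agree (Suc m) (S k)" for k
    unfolding S_def using slice_kvert[OF J] slice_agree[OF J ag] by auto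
  have ekrS: "card (S k) \<le> r ^ m" for k using ekr[OF Sk] .
  define bad where "bad k \<longleftrightarrow> \<not> (2 * card (S k) + (r-1)^m \<le> 2 * r^m)" for k
  have B1: "\<exists>a<r. (\<exists>x\<in>J. x m = a \<and> x (Suc m) = (a + k) mod r)
              \<and> (\<forall>w\<in>J. w m = a \<or> w (Suc m) = (a + k) mod r)"
    if k: "k < r" and b: "bad k" for k
  proof -
    have "dict r (Suc m) (S k)" using Suc.IH[OF Sk] b unfolding bad_def by blast
    then obtain i a where ia: "i < Suc m" "a < r" "\<forall>y\<in>S k. y i = a" by (auto simp: dict_def)
    show ?thesis
    proof (cases "i = m")
      case False
      then have im: "i < m" using ia by simp
      obtain w where w: "w \<in> J" "w i \<noteq> a" using nd ia im unfolding dict_def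
        by (metis less_SucI)
      have "2 * card (S k) + (r-1)^m \<le> 2 * r^m"
        unfolding S_def by (rule bad_case_lt[OF r3 J ag im ia(2) k _ w]) (use ia in \<open>simp add: S_def\<close>)
      then show ?thesis using b unfolding bad_def by blast
    next
      case True
      have ne: "S k \<noteq> {}"
      proof
        assume "S k = {}"
        moreover have "(r-1)^m \<le> r^m" by (simp add: power_mono)
        ultimately show False using b unfolding bad_def by simp
      qed
      then obtain y where y: "y \<in> S k" by blast
      then obtain x where x: "x \<in> J" "x (Suc m) = (x m + k) mod r" "y = x(Suc m := 0)"
        unfolding S_def by (rule slice_memD)
      have xa: "x m = a" using ia(3) y x(3) True by simp
      have all: "\<forall>w\<in>J. w m = a \<or> w (Suc m) = (a + k) mod r"
      proof (rule ccontr)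
        assume "\<not> (\<forall>w\<in>J. w m = a \<or> w (Suc m) = (a + k) mod r)"
        then obtain w where w: "w \<in> J" "w m \<noteq> a" "w (Suc m) \<noteq> (a + k) mod r" by blast
        have "2 * card (S k) + (r-1)^m \<le> 2 * r^m"
          unfolding S_def by (rule bad_case_eq[OF J ag ia(2) k _ w]) (use ia True in \<open>simp add: S_def\<close>)
        then show False using b unfolding bad_def by blast
      qed
      show ?thesis using ia(2) x(1,2) xa all by blast
    qed
  qed
  have B2: "card {k\<in>{..<r}. bad k} \<le> Suc 0"
  proof (subst card_le_Suc0_iff_eq, simp, intro ballI, rule ccontr)
    fix k1 k2 assume k1: "k1 \<in> {k\<in>{..<r}. bad k}" and k2: "k2 \<in> {k\<in>{..<r}. bad k}" and ne: "k1 \<noteq> k2"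
    obtain a1 x1 where a1: "a1 < r" "x1 \<in> J" "x1 m = a1" "x1 (Suc m) = (a1 + k1) mod r"
      and all1: "\<forall>w\<in>J. w m = a1 \<or> w (Suc m) = (a1 + k1) mod r" using B1 k1 by blast
    obtain a2 where a2: "a2 < r" and all2: "\<forall>w\<in>J. w m = a2 \<or> w (Suc m) = (a2 + k2) mod r"
      using B1 k2 by blast
    have k12: "k1 < r" "k2 < r" using k1 k2 by auto
    show False
    proof (cases "a1 = a2")
      case True
      have "(a1 + k1) mod r \<noteq> (a1 + k2) mod r" using mod_cancel_lt2[of a1 k1 r k2] k12 ne by blast
      then have "\<forall>w\<in>J. w m = a1" using all1 all2 True by metis
      then have "dict r (Suc (Suc m)) J" using a1(1) unfolding dict_def by (intro exI[of _ m]) auto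
      then show False using nd by simp
    next
      case False
      have "(a1 + k1) mod r = (a2 + k2) mod r" using all2 a1 False by metis
      then have "\<forall>w\<in>J. w (Suc m) = (a1 + k1) mod r" using all1 all2 False by metis
      moreover have "(a1 + k1) mod r < r" using a1(1) by simp
      ultimately have "dict r (Suc (Suc m)) J" unfolding dict_def by blast
      then show False using nd by simp
    qed
  qed
  have each: "2 * card (S k) + (if bad k then 0 else (r-1)^m) \<le> 2 * r^m" for k
    using ekrS[of k] unfolding bad_def by auto
  have "(\<Sum>k<r. 2 * card (S k) + (if bad k then 0 else (r-1)^m)) \<le> (\<Sum>k<r. 2 * r^m)"
    by (rule sum_mono) (rule each)
  also have "\<dots> = 2 * r ^ Suc m" by simp
  also have "(\<Sum>k<r. 2 * card (S k) + (if bad k then 0 else (r-1)^m))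
      = 2 * card J + (\<Sum>k<r. (if bad k then 0 else (r-1)^m))"
    using card_slices[OF J] by (simp add: sum.distrib sum_distrib_left S_def)
  also have "(\<Sum>k<r. (if bad k then 0 else (r-1)^m)) = (\<Sum>k\<in>{k\<in>{..<r}. \<not> bad k}. (r-1)^m)"
    by (subst sum.inter_filter) (auto intro: sum.cong)
  also have "\<dots> = card {k\<in>{..<r}. \<not> bad k} * (r-1)^m" by simp
  finally have F: "2 * card J + card {k\<in>{..<r}. \<not> bad k} * (r-1)^m \<le> 2 * r ^ Suc m" .
  have "{..<r} \<subseteq> {k\<in>{..<r}. bad k} \<union> {k\<in>{..<r}. \<not> bad k}" by blast
  then have "card {..<r} \<le> card ({k\<in>{..<r}. bad k} \<union> {k\<in>{..<r}. \<not> bad k})"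
    by (intro card_mono) auto
  also have "\<dots> \<le> card {k\<in>{..<r}. bad k} + card {k\<in>{..<r}. \<not> bad k}" by (rule card_Un_le)
  finally have "r - 1 \<le> card {k\<in>{..<r}. \<not> bad k}" using B2 by simp
  then have "(r - 1) * (r-1)^m \<le> card {k\<in>{..<r}. \<not> bad k} * (r-1)^m" by (rule mult_le_mono1)
  then have G: "(r - 1) ^ Suc m \<le> card {k\<in>{..<r}. \<not> bad k} * (r-1)^m" by simp
  show ?case using F G by linarith
qed



lemma kindep_agree: "kindep r n J \<Longrightarrow> J \<subseteq> kvert r n \<and> agree n J"
  unfolding kindep_def kadj_def agree_def by blast

lemma card_dict:
  assumes "i < n" "a < r"
  shows "card {x\<in>kvert r n. x i = a} = r ^ (n - 1)"
proof -
  define S where "S j = (if j = i then {a} else {..<r})" for j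
  have eq: "{x\<in>kvert r n. x i = a} = box n S"
    using assms by (auto simp: kvert_def box_def S_def)
  have fin: "\<forall>j<n. finite (S j)" by (simp add: S_def)
  have "card (box n S) = (\<Prod>j<n. card (S j))" using card_box[OF fin] by simp
  also have "\<dots> = (\<Prod>j<n. if j = i then 1 else r)" by (rule prod.cong) (auto simp: S_def)
  also have "\<dots> = r ^ (n - 1)" using prod_except[OF assms(1)] by simp
  finally show ?thesis using eq by simp
qed

theorem corollary1:
  fixes r n :: nat and \<epsilon> c :: real and J :: "(nat \<Rightarrow> nat) set"
  assumes "r \<ge> 20" and "n \<ge> 1"
    and "c = (1/40) * min (10 powr (-9)) ((1 - 1 / real r) ^ (n - 1))"
    and "0 \<le> \<epsilon>" and "\<epsilon> < c"
    and "kindep r n J"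
    and "real (card J) / real (card (kvert r n)) = (1 / real r) * (1 - \<epsilon>)"
  shows "\<exists>I. kindep r n I \<and> real (card I) / real (card (kvert r n)) = 1 / real r \<and> J \<subseteq> I"
proof -
  obtain n' where n: "n = Suc n'" using assms(2) by (cases n) auto
  have J: "J \<subseteq> kvert r n" "agree n J" using kindep_agree[OF assms(6)] by auto
  have rpos: "real r > 0" using assms(1) by simp
  have ck: "real (card (kvert r n)) = real r * real r ^ n'" by (simp add: card_kvert n)
  have cJ: "real (card J) = real r ^ n' * (1 - \<epsilon>)"
    using assms(7) rpos unfolding ck by (simp add: field_simps)
  have d: "dict r n J"
  proof (rule ccontr)
    assume nd: "\<not> dict r n J"
    have "2 * card J + (r-1)^n' \<le> 2 * r^n'"
      using hm[where r=r and n=n' and J=J] J nd assms(1) n by simp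
    then have "real (2 * card J + (r-1)^n') \<le> real (2 * r^n')" by linarith
    then have h1: "2 * (real r ^ n' * (1 - \<epsilon>)) + (real r - 1) ^ n' \<le> 2 * real r ^ n'"
      using assms(1) by (simp add: cJ of_nat_diff)
    have "(1 - 1 / real r) ^ n' = (real r - 1) ^ n' / real r ^ n'"
    proof -
      have "1 - 1 / real r = (real r - 1) / real r" using rpos by (simp add: field_simps)
      then show ?thesis by (simp add: power_divide)
    qed
    then have "c \<le> (1/40) * ((real r - 1) ^ n' / real r ^ n')"
      using assms(3) n by simp
    then have c1: "c * (real r ^ n' * 40) \<le> (real r - 1) ^ n'"
      using rpos by (simp add: field_simps)
    have "\<epsilon> * (real r ^ n' * 40) < c * (real r ^ n' * 40)"
      by (rule mult_strict_right_mono[OF assms(5)]) (use rpos in simp)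
    then have "\<epsilon> * real r ^ n' < (1/40) * (real r - 1) ^ n'" using c1 by simp
    moreover have "(real r - 1) ^ n' > 0" using assms(1) by simp
    ultimately show False using h1 by (simp add: algebra_simps)
  qed
  then obtain i a where ia: "i < n" "a < r" "\<forall>x\<in>J. x i = a" unfolding dict_def by blast
  define I where "I = {x\<in>kvert r n. x i = a}"
  have "kindep r n I"
    unfolding kindep_def kadj_def I_def using ia(1) by blast
  moreover have "real (card I) / real (card (kvert r n)) = 1 / real r"
    using card_dict[OF ia(1,2)] rpos unfolding I_def ck by (simp add: n)
  moreover have "J \<subseteq> I" using J(1) ia(3) unfolding I_def by blast
  ultimately show ?thesis by blast
qed

end
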